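(* For any persuasive signaling scheme $\varphi$, there exists an identity-independent signaling scheme $\widetilde{\varphi}$ that is persuasive and has $\mathrm{Cost}(\widetilde{\varphi})=\mathrm{Cost}(\varphi)$.
   Context: Setting. $V$ is a finite set of $n$ task types and $W=(W_{u,v})_{u,v\in V}$ is a symmetric matrix with entries in $[0,1]$ and $W_{v,v}=1$. There are $n$ agents; the type profile $t=(t_1,\dots,t_n)$ is a uniformly random bijection $[n]\to V$. A signaling scheme with finite signal space $\Sigma\subset[0,1]$ is a map $\varphi$ assigning to each bijection $t$ a distribution $\varphi(t)$ on $\Sigma^V$; given $t$, $s=(s_v)_{v\in V}\sim\varphi(t)$ is drawn and agent $i$ privately receives $s_{t_i}$. For agent $i$, a signal $\theta\in\Sigma$ with $\Pr[s_{t_i}=\theta]>0$ and $x\ge0$, let $Q_i(x\mid\theta)=\mathbb{E}\big[x+\sum_{v'\neq t_i}W_{t_i,v'}s_{v'}\,\big|\,s_{t_i}=\theta\big]$ (over the joint law of $t,s$). The scheme is persuasive if for every agent $i$ and every such $\theta$: $Q_i(\theta\mid\theta)\ge1$ and $\theta=\min\{x\ge0:Q_i(x\mid\theta)\ge1\}$. $\mathrm{Cost}(\varphi)=\mathbb{E}_{t,\,s\sim\varphi(t)}[\|s\|_1]$. The scheme is identity-independent if there is a distribution $\mathcal{D}_\varphi$ on $\Sigma^V$ with $\varphi(t)=\mathcal{D}_\varphi$ for every bijection $t$. *)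

theory Defs
  imports "HOL-Probability.Probability"
begin

text \<open>Task types: a finite type 'v with n = CARD('v). Agents: {..<n}.
A type profile is a bijection t from {..<n} onto UNIV (extensional outside {..<n}).\<close>

definition type_profiles :: "(nat \<Rightarrow> 'v::finite) set" where
  "type_profiles = {t. bij_betw t {..<CARD('v)} (UNIV :: 'v set) \<and> t \<in> extensional {..<CARD('v)}}"

definition signaling_scheme :: "real set \<Rightarrow> ((nat \<Rightarrow> 'v::finite) \<Rightarrow> ('v \<Rightarrow> real) pmf) \<Rightarrow> bool" where
  "signaling_scheme Sig \<phi> \<longleftrightarrow> finite Sig \<and> Sig \<subseteq> {0..1} \<and>
     (\<forall>t \<in> type_profiles. set_pmf (\<phi> t) \<subseteq> {s. \<forall>v. s v \<in> Sig})"

definition joint :: "((nat \<Rightarrow> 'v::finite) \<Rightarrow> ('v \<Rightarrow> real) pmf) \<Rightarrow> ((nat \<Rightarrow> 'v) \<times> ('v \<Rightarrow> real)) pmf" where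
  "joint \<phi> = bind_pmf (pmf_of_set type_profiles) (\<lambda>t. map_pmf (\<lambda>s. (t, s)) (\<phi> t))"

definition sig_prob :: "((nat \<Rightarrow> 'v::finite) \<Rightarrow> ('v \<Rightarrow> real) pmf) \<Rightarrow> nat \<Rightarrow> real \<Rightarrow> real" where
  "sig_prob \<phi> i \<theta> = measure_pmf.prob (joint \<phi>) {(t, s). s (t i) = \<theta>}"

text \<open>Q_i(x | \<theta>) = E[x + \<Sum>_{v' \<noteq> t_i} W(t_i,v') s_{v'} | s_{t_i} = \<theta>]
(elementary conditional expectation given an event of positive probability).\<close>

definition Q :: "('v::finite \<Rightarrow> 'v \<Rightarrow> real) \<Rightarrow> ((nat \<Rightarrow> 'v) \<Rightarrow> ('v \<Rightarrow> real) pmf) \<Rightarrow> nat \<Rightarrow> real \<Rightarrow> real \<Rightarrow> real" where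
  "Q W \<phi> i x \<theta> =
     measure_pmf.expectation (joint \<phi>)
       (\<lambda>(t, s). indicator {(t', s'). s' (t' i) = \<theta>} (t, s) *
                 (x + (\<Sum>v' \<in> UNIV - {t i}. W (t i) v' * s v')))
     / sig_prob \<phi> i \<theta>"

definition persuasive :: "('v::finite \<Rightarrow> 'v \<Rightarrow> real) \<Rightarrow> real set \<Rightarrow> ((nat \<Rightarrow> 'v) \<Rightarrow> ('v \<Rightarrow> real) pmf) \<Rightarrow> bool" where
  "persuasive W Sig \<phi> \<longleftrightarrow>
     (\<forall>i < CARD('v). \<forall>\<theta> \<in> Sig. sig_prob \<phi> i \<theta> > 0 \<longrightarrow>
        Q W \<phi> i \<theta> \<theta> \<ge> 1 \<and>
        \<theta> = (LEAST x. x \<ge> 0 \<and> Q W \<phi> i x \<theta> \<ge> 1))"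

definition cost :: "((nat \<Rightarrow> 'v::finite) \<Rightarrow> ('v \<Rightarrow> real) pmf) \<Rightarrow> real" where
  "cost \<phi> = measure_pmf.expectation (joint \<phi>) (\<lambda>(t, s). \<Sum>v\<in>UNIV. \<bar>s v\<bar>)"

definition identity_independent :: "((nat \<Rightarrow> 'v::finite) \<Rightarrow> ('v \<Rightarrow> real) pmf) \<Rightarrow> bool" where
  "identity_independent \<phi> \<longleftrightarrow> (\<exists>D. \<forall>t \<in> type_profiles. \<phi> t = D)"

end

theory Submission imports Defs begin

lemma T_finite: "finite (type_profiles :: (nat \<Rightarrow> 'v::finite) set)"
proof -
  have "type_profiles \<subseteq> (PiE {..<CARD('v)} (\<lambda>_. (UNIV::'v set)))"
    unfolding type_profiles_def by (auto simp: PiE_def)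
  moreover have "finite (PiE {..<CARD('v)} (\<lambda>_. (UNIV::'v set)))"
    by (intro finite_PiE) auto
  ultimately show ?thesis by (rule finite_subset)
qed

lemma T_nonempty: "(type_profiles :: (nat \<Rightarrow> 'v::finite) set) \<noteq> {}"
proof -
  obtain h :: "nat \<Rightarrow> 'v" where h: "bij_betw h {0..<card (UNIV::'v set)} UNIV"
    using ex_bij_betw_nat_finite[of "UNIV :: 'v set"] by auto
  have "restrict h {..<CARD('v)} \<in> type_profiles"
    unfolding type_profiles_def using h
    by (auto simp: atLeast0LessThan intro: bij_betw_cong[THEN iffD1, OF _ h] )
  then show ?thesis by auto
qed

lemma E_joint:
  fixes \<phi> :: "(nat \<Rightarrow> 'v::finite) \<Rightarrow> ('v \<Rightarrow> real) pmf" and g :: "(nat \<Rightarrow> 'v) \<times> ('v \<Rightarrow> real) \<Rightarrow> real"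
  assumes fs: "\<forall>t\<in>type_profiles. finite (set_pmf (\<phi> t))"
  shows "measure_pmf.expectation (joint \<phi>) g =
     (\<Sum>t\<in>type_profiles. measure_pmf.expectation (\<phi> t) (\<lambda>s. g (t, s))) / card (type_profiles :: (nat \<Rightarrow> 'v) set)"
proof -
  have "measure_pmf.expectation (joint \<phi>) g =
     (\<Sum>t\<in>type_profiles. pmf (pmf_of_set type_profiles) t *\<^sub>R measure_pmf.expectation (map_pmf (\<lambda>s. (t, s)) (\<phi> t)) g)"
    unfolding joint_def
    by (rule pmf_expectation_bind) (use fs T_finite T_nonempty set_pmf_of_set[OF T_nonempty T_finite] in auto)
  also have "\<dots> = (\<Sum>t\<in>type_profiles. measure_pmf.expectation (\<phi> t) (\<lambda>s. g (t, s)) / card (type_profiles :: (nat \<Rightarrow> 'v) set))"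
    proof (intro sum.cong refl)
    fix t assume t: "t \<in> (type_profiles :: (nat \<Rightarrow> 'v) set)"
    have "pmf (pmf_of_set type_profiles) t = 1 / card (type_profiles :: (nat \<Rightarrow> 'v) set)"
      using t by (simp add: pmf_of_set[OF T_nonempty[where 'v='v] T_finite[where 'v='v]] indicator_def)
    then show "pmf (pmf_of_set type_profiles) t *\<^sub>R measure_pmf.expectation (map_pmf (\<lambda>s. (t, s)) (\<phi> t)) g =
       measure_pmf.expectation (\<phi> t) (\<lambda>s. g (t, s)) / card (type_profiles :: (nat \<Rightarrow> 'v) set)"
      by simp
  qed
  finally show ?thesis by (simp add: sum_divide_distrib)
qed

lemma joint_fin:
  fixes \<phi> :: "(nat \<Rightarrow> 'v::finite) \<Rightarrow> ('v \<Rightarrow> real) pmf"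
  assumes fs: "\<forall>t\<in>type_profiles. finite (set_pmf (\<phi> t))"
  shows "finite (set_pmf (joint \<phi>))"
  unfolding joint_def using fs T_finite by (simp add: set_pmf_of_set[OF T_nonempty T_finite])
  (intro finite_UN_I; auto)

lemma perm_sum:
  fixes F :: "'v::finite \<Rightarrow> real"
  assumes i: "i < CARD('v)" and j: "j < CARD('v)"
  shows "(\<Sum>t\<in>(type_profiles :: (nat \<Rightarrow> 'v) set). F (t i)) = (\<Sum>t\<in>type_profiles. F (t j))"
proof -
  define \<sigma> where "\<sigma> = (\<lambda>k::nat. if k = i then j else if k = j then i else k)"
  have ss: "\<sigma> (\<sigma> k) = k" for k unfolding \<sigma>_def by auto
  have sb: "bij_betw \<sigma> {..<CARD('v)} {..<CARD('v)}"
    by (rule bij_betwI[of \<sigma> _ _ \<sigma>]) (use i j ss in \<open>auto simp: \<sigma>_def\<close>)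
  have mem: "t \<circ> \<sigma> \<in> type_profiles" if t: "t \<in> (type_profiles :: (nat \<Rightarrow> 'v) set)" for t
  proof -
    have "bij_betw (t \<circ> \<sigma>) {..<CARD('v)} UNIV"
      using t sb unfolding type_profiles_def by (auto intro: bij_betw_trans)
    moreover have "t \<circ> \<sigma> \<in> extensional {..<CARD('v)}"
      using t i j unfolding type_profiles_def extensional_def \<sigma>_def by auto
    ultimately show ?thesis unfolding type_profiles_def by auto
  qed
  show ?thesis
  proof (rule sum.reindex_bij_witness[of _ "\<lambda>t. t \<circ> \<sigma>" "\<lambda>t. t \<circ> \<sigma>"])
    fix t :: "nat \<Rightarrow> 'v"
    show "t \<circ> \<sigma> \<circ> \<sigma> = t" using ss by (auto simp: fun_eq_iff)
    show "F ((t \<circ> \<sigma>) j) = F (t i)" by (simp add: \<sigma>_def)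
  qed (use ss in \<open>auto intro: mem simp: fun_eq_iff\<close>)
qed

lemma avg_sum:
  fixes F :: "'v::finite \<Rightarrow> real"
  assumes i: "i < CARD('v)"
  shows "(\<Sum>t\<in>(type_profiles :: (nat \<Rightarrow> 'v) set). F (t i)) =
     card (type_profiles :: (nat \<Rightarrow> 'v) set) / CARD('v) * (\<Sum>u\<in>UNIV. F u)"
proof -
  have "CARD('v) * (\<Sum>t\<in>(type_profiles :: (nat \<Rightarrow> 'v) set). F (t i)) =
      (\<Sum>j<CARD('v). \<Sum>t\<in>(type_profiles :: (nat \<Rightarrow> 'v) set). F (t j))"
  proof -
    have "(\<Sum>j<CARD('v). \<Sum>t\<in>(type_profiles :: (nat \<Rightarrow> 'v) set). F (t j)) =
       (\<Sum>j<CARD('v). \<Sum>t\<in>(type_profiles :: (nat \<Rightarrow> 'v) set). F (t i))"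
      by (rule sum.cong) (use perm_sum[OF _ i, of _ F] in auto)
    then show ?thesis by simp
  qed
  also have "\<dots> = (\<Sum>t\<in>(type_profiles :: (nat \<Rightarrow> 'v) set). \<Sum>j<CARD('v). F (t j))"
    by (rule sum.swap)
  also have "\<dots> = (\<Sum>t\<in>(type_profiles :: (nat \<Rightarrow> 'v) set). \<Sum>u\<in>UNIV. F u)"
  proof (intro sum.cong refl)
    fix t :: "nat \<Rightarrow> 'v" assume "t \<in> type_profiles"
    then have "bij_betw t {..<CARD('v)} UNIV" unfolding type_profiles_def by auto
    then show "(\<Sum>j<CARD('v). F (t j)) = (\<Sum>u\<in>UNIV. F u)"
      using sum.reindex_bij_betw[of t "{..<CARD('v)}" UNIV F] by simp
  qed
  also have "\<dots> = card (type_profiles :: (nat \<Rightarrow> 'v) set) * (\<Sum>u\<in>UNIV. F u)" by simp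
  finally have "real CARD('v) * (\<Sum>t\<in>(type_profiles :: (nat \<Rightarrow> 'v) set). F (t i)) =
     card (type_profiles :: (nat \<Rightarrow> 'v) set) * (\<Sum>u\<in>UNIV. F u)" .
  moreover have "real CARD('v) > 0" by simp
  ultimately show ?thesis by (simp add: field_simps)
qed

definition Dm :: "((nat \<Rightarrow> 'v::finite) \<Rightarrow> ('v \<Rightarrow> real) pmf) \<Rightarrow> ('v \<Rightarrow> real) pmf" where
  "Dm \<phi> = map_pmf snd (joint \<phi>)"

definition EJ :: "((nat \<Rightarrow> 'v::finite) \<Rightarrow> ('v \<Rightarrow> real) pmf) \<Rightarrow> ('v \<Rightarrow> ('v \<Rightarrow> real) \<Rightarrow> real) \<Rightarrow> nat \<Rightarrow> real" where
  "EJ \<phi> f i = measure_pmf.expectation (joint \<phi>) (\<lambda>(t, s). f (t i) s)"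

lemma bij_sum:
  fixes G :: "'v::finite \<Rightarrow> real"
  assumes "t \<in> type_profiles"
  shows "(\<Sum>j<CARD('v). G (t j)) = (\<Sum>u\<in>UNIV. G u)"
proof -
  from assms have "bij_betw t {..<CARD('v)} UNIV" unfolding type_profiles_def by auto
  then show ?thesis using sum.reindex_bij_betw[of t "{..<CARD('v)}" UNIV G] by simp
qed

lemma avg_EJ:
  fixes \<phi> :: "(nat \<Rightarrow> 'v::finite) \<Rightarrow> ('v \<Rightarrow> real) pmf"
  assumes fs: "\<forall>t\<in>type_profiles. finite (set_pmf (\<phi> t))" and i: "i < CARD('v)"
  shows "EJ (\<lambda>_. Dm \<phi>) f i = (\<Sum>j<CARD('v). EJ \<phi> f j) / CARD('v)"
proof -
  let ?T = "type_profiles :: (nat \<Rightarrow> 'v) set"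
  define N where "N = real (card ?T)"
  have Npos: "N > 0" unfolding N_def using T_finite[where 'v='v] T_nonempty[where 'v='v]
    by (simp add: card_gt_0_iff)
  have fsD: "\<forall>t\<in>type_profiles. finite (set_pmf ((\<lambda>_. Dm \<phi>) t))"
    unfolding Dm_def using joint_fin[OF fs] by simp
  have ED: "measure_pmf.expectation (Dm \<phi>) h = (\<Sum>t\<in>?T. measure_pmf.expectation (\<phi> t) h) / N" for h
    unfolding Dm_def N_def by (simp add: E_joint[OF fs])
  have "EJ (\<lambda>_. Dm \<phi>) f i = (\<Sum>t\<in>?T. measure_pmf.expectation (Dm \<phi>) (f (t i))) / N"
    unfolding EJ_def N_def by (simp add: E_joint[OF fsD])
  also have "\<dots> = (N / CARD('v) * (\<Sum>u\<in>UNIV. measure_pmf.expectation (Dm \<phi>) (f u))) / N"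
    unfolding N_def by (subst avg_sum[OF i, of "\<lambda>u. measure_pmf.expectation (Dm \<phi>) (f u)"]) simp
  also have "\<dots> = (\<Sum>u\<in>UNIV. measure_pmf.expectation (Dm \<phi>) (f u)) / CARD('v)"
    using Npos by simp
  also have "(\<Sum>u\<in>UNIV. measure_pmf.expectation (Dm \<phi>) (f u)) =
      (\<Sum>u\<in>UNIV. \<Sum>t\<in>?T. measure_pmf.expectation (\<phi> t) (f u)) / N"
    by (simp add: ED sum_divide_distrib)
  also have "(\<Sum>u\<in>UNIV. \<Sum>t\<in>?T. measure_pmf.expectation (\<phi> t) (f u)) =
      (\<Sum>t\<in>?T. \<Sum>u\<in>UNIV. measure_pmf.expectation (\<phi> t) (f u))"
    by (rule sum.swap)
  also have "\<dots> = (\<Sum>t\<in>?T. \<Sum>j<CARD('v). measure_pmf.expectation (\<phi> t) (f (t j)))"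
    by (intro sum.cong refl) (rule bij_sum[symmetric])
  also have "\<dots> = (\<Sum>j<CARD('v). \<Sum>t\<in>?T. measure_pmf.expectation (\<phi> t) (f (t j)))"
    by (rule sum.swap)
  also have "\<dots> / N = (\<Sum>j<CARD('v). EJ \<phi> f j)"
    unfolding EJ_def N_def by (simp add: E_joint[OF fs] sum_divide_distrib)
  finally show ?thesis .
qed

lemma SV_finite: "finite Sig \<Longrightarrow> finite {s :: 'v::finite \<Rightarrow> real. \<forall>v. s v \<in> Sig}"
proof -
  assume f: "finite Sig"
  have "{s :: 'v \<Rightarrow> real. \<forall>v. s v \<in> Sig} = PiE UNIV (\<lambda>_. Sig)"
    by (auto simp: PiE_UNIV_domain Pi_def)
  then show ?thesis using f by (simp add: finite_PiE)
qed

lemma scheme_fs: "signaling_scheme Sig \<phi> \<Longrightarrow> \<forall>t\<in>type_profiles. finite (set_pmf (\<phi> t))"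
proof
  fix t :: "nat \<Rightarrow> 'a" assume sch: "signaling_scheme Sig \<phi>" and t: "t \<in> type_profiles"
  then have "set_pmf (\<phi> t) \<subseteq> {s. \<forall>v. s v \<in> Sig}" "finite Sig" unfolding signaling_scheme_def by auto
  then show "finite (set_pmf (\<phi> t))" by (rule finite_subset[OF _ SV_finite])
qed

lemma joint_supp:
  "x \<in> set_pmf (joint \<phi>) \<Longrightarrow> fst x \<in> type_profiles \<and> snd x \<in> set_pmf (\<phi> (fst x))"
  unfolding joint_def by (auto simp: set_pmf_of_set[OF T_nonempty T_finite])

definition fP :: "real \<Rightarrow> 'v \<Rightarrow> ('v \<Rightarrow> real) \<Rightarrow> real" where
  "fP \<theta> u s = (if s u = \<theta> then 1 else 0)"

definition fM :: "('v::finite \<Rightarrow> 'v \<Rightarrow> real) \<Rightarrow> real \<Rightarrow> 'v \<Rightarrow> ('v \<Rightarrow> real) \<Rightarrow> real" where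
  "fM W \<theta> u s = (if s u = \<theta> then 1 else 0) * (\<Sum>v' \<in> UNIV - {u}. W u v' * s v')"

lemma sp_eq: "sig_prob \<phi> i \<theta> = EJ \<phi> (fP \<theta>) i"
proof -
  have "sig_prob \<phi> i \<theta> = measure_pmf.expectation (joint \<phi>) (indicator {(t, s). s (t i) = \<theta>})"
    unfolding sig_prob_def by (simp add: measure_pmf.emeasure_eq_measure)
  also have "indicator {(t, s). s (t i) = \<theta>} = (\<lambda>(t, s). fP \<theta> (t i) s)"
    by (auto simp: fun_eq_iff fP_def indicator_def)
  finally show ?thesis unfolding EJ_def .
qed

lemma Q_eq:
  assumes fs: "\<forall>t\<in>type_profiles. finite (set_pmf (\<phi> t))"
  shows "Q W \<phi> i x \<theta> = (x * EJ \<phi> (fP \<theta>) i + EJ \<phi> (fM W \<theta>) i) / sig_prob \<phi> i \<theta>"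
proof -
  have fin: "finite (set_pmf (joint \<phi>))" by (rule joint_fin[OF fs])
  have e: "(\<lambda>(t, s). indicator {(t', s'). s' (t' i) = \<theta>} (t, s) *
                 (x + (\<Sum>v' \<in> UNIV - {t i}. W (t i) v' * s v'))) =
        (\<lambda>y. x * (\<lambda>(t, s). fP \<theta> (t i) s) y + (\<lambda>(t, s). fM W \<theta> (t i) s) y)"
    by (auto simp: fun_eq_iff fP_def fM_def indicator_def)
  have "measure_pmf.expectation (joint \<phi>) (\<lambda>y. x * (\<lambda>(t, s). fP \<theta> (t i) s) y + (\<lambda>(t, s). fM W \<theta> (t i) s) y)
     = measure_pmf.expectation (joint \<phi>) (\<lambda>y. x * (\<lambda>(t, s). fP \<theta> (t i) s) y) + measure_pmf.expectation (joint \<phi>) (\<lambda>(t, s). fM W \<theta> (t i) s)"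
    by (rule Bochner_Integration.integral_add) (auto intro: integrable_measure_pmf_finite[OF fin])
  then show ?thesis unfolding Q_def EJ_def e by simp
qed

lemma cost_eq:
  assumes fs: "\<forall>t\<in>type_profiles. finite (set_pmf (\<phi> t))"
  shows "cost (\<lambda>_. Dm \<phi>) = cost \<phi>"
proof -
  have fsD: "\<forall>t\<in>type_profiles. finite (set_pmf ((\<lambda>_. Dm \<phi>) t))"
    unfolding Dm_def using joint_fin[OF fs] by simp
  have c1: "cost \<phi> = measure_pmf.expectation (Dm \<phi>) (\<lambda>s. \<Sum>v\<in>UNIV. \<bar>s v\<bar>)"
    unfolding cost_def Dm_def by (simp add: case_prod_unfold)
  have "cost (\<lambda>_. Dm \<phi>) = (\<Sum>t\<in>(type_profiles :: (nat \<Rightarrow> 'a) set). measure_pmf.expectation (Dm \<phi>) (\<lambda>s. \<Sum>v\<in>UNIV. \<bar>s v\<bar>)) / card (type_profiles :: (nat \<Rightarrow> 'a) set)"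
    unfolding cost_def by (simp add: E_joint[OF fsD])
  also have "\<dots> = measure_pmf.expectation (Dm \<phi>) (\<lambda>s. \<Sum>v\<in>UNIV. \<bar>s v\<bar>)"
    using T_finite[where 'v='a] T_nonempty[where 'v='a] by (simp add: card_gt_0_iff)
  finally show ?thesis using c1 by simp
qed

lemma M_bounds:
  fixes \<phi> :: "(nat \<Rightarrow> 'v::finite) \<Rightarrow> ('v \<Rightarrow> real) pmf"
  assumes sch: "signaling_scheme Sig \<phi>" and W_range: "\<And>u v. 0 \<le> W u v \<and> W u v \<le> 1"
  shows "0 \<le> EJ \<phi> (fM W \<theta>) i \<and> EJ \<phi> (fM W \<theta>) i \<le> CARD('v) * EJ \<phi> (fP \<theta>) i"
proof -
  have fin: "finite (set_pmf (joint \<phi>))" by (rule joint_fin[OF scheme_fs[OF sch]])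
  have s01: "0 \<le> s v \<and> s v \<le> 1" if "y \<in> set_pmf (joint \<phi>)" "s = snd y" for y s v
  proof -
    from joint_supp[OF that(1)] sch have "s v \<in> Sig" unfolding signaling_scheme_def using that(2) by blast
    then show ?thesis using sch unfolding signaling_scheme_def by auto
  qed
  have pw: "0 \<le> fM W \<theta> u s \<and> fM W \<theta> u s \<le> CARD('v) * fP \<theta> u s" if "\<And>v. 0 \<le> s v \<and> s v \<le> 1" for u s
  proof -
    have a: "0 \<le> (\<Sum>v' \<in> UNIV - {u}. W u v' * s v')"
      by (intro sum_nonneg) (use that W_range in auto)
    have "(\<Sum>v' \<in> UNIV - {u}. W u v' * s v') \<le> (\<Sum>v' \<in> (UNIV::'v set). 1)"
    proof -
      have "(\<Sum>v' \<in> UNIV - {u}. W u v' * s v') \<le> (\<Sum>v' \<in> UNIV - {u}. 1)"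
        by (intro sum_mono) (use that W_range in \<open>auto intro: mult_le_one\<close>)
      also have "\<dots> \<le> (\<Sum>v' \<in> (UNIV::'v set). 1)" by (intro sum_mono2) auto
      finally show ?thesis .
    qed
    then show ?thesis using a by (auto simp: fM_def fP_def)
  qed
  have allpw: "0 \<le> (\<lambda>(t, s). fM W \<theta> (t i) s) y \<and> (\<lambda>(t, s). fM W \<theta> (t i) s) y \<le> CARD('v) * (\<lambda>(t, s). fP \<theta> (t i) s) y"
    if y: "y \<in> set_pmf (joint \<phi>)" for y
  proof -
    obtain t s where ts: "y = (t, s)" by (cases y)
    have "\<And>v. 0 \<le> s v \<and> s v \<le> 1" using s01[OF y] ts by simp
    from pw[OF this, of "t i"] show ?thesis unfolding ts by simp
  qed
  have "0 \<le> EJ \<phi> (fM W \<theta>) i" unfolding EJ_def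
    by (intro integral_nonneg_AE AE_pmfI) (use allpw in blast)
  moreover have "EJ \<phi> (fM W \<theta>) i \<le> measure_pmf.expectation (joint \<phi>) (\<lambda>y. CARD('v) * (\<lambda>(t, s). fP \<theta> (t i) s) y)"
    unfolding EJ_def
    by (intro integral_mono_AE AE_pmfI integrable_measure_pmf_finite[OF fin]) (use allpw in blast)
  ultimately show ?thesis unfolding EJ_def by simp
qed

lemma least_lem: "(LEAST x::real. 0 \<le> x \<and> 1 \<le> x + c) = max 0 (1 - c)"
  by (rule Least_equality) auto

theorem lemma2p1:
  fixes W :: "'v::finite \<Rightarrow> 'v \<Rightarrow> real"
    and Sig :: "real set"
    and \<phi> :: "(nat \<Rightarrow> 'v) \<Rightarrow> ('v \<Rightarrow> real) pmf"
  assumes W_sym: "\<And>u v. W u v = W v u"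
    and W_range: "\<And>u v. 0 \<le> W u v \<and> W u v \<le> 1"
    and W_diag: "\<And>v. W v v = 1"
    and scheme: "signaling_scheme Sig \<phi>"
    and pers: "persuasive W Sig \<phi>"
  shows "\<exists>Sig' (\<psi> :: (nat \<Rightarrow> 'v) \<Rightarrow> ('v \<Rightarrow> real) pmf).
           signaling_scheme Sig' \<psi> \<and> identity_independent \<psi> \<and>
           persuasive W Sig' \<psi> \<and> cost \<psi> = cost \<phi>"
proof (intro exI conjI)
  have fs: "\<forall>t\<in>type_profiles. finite (set_pmf (\<phi> t))" by (rule scheme_fs[OF scheme])
  define \<psi> :: "(nat \<Rightarrow> 'v) \<Rightarrow> ('v \<Rightarrow> real) pmf" where "\<psi> = (\<lambda>_. Dm \<phi>)"
  show "cost \<psi> = cost \<phi>" unfolding \<psi>_def by (rule cost_eq[OF fs])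
  show "identity_independent \<psi>" unfolding \<psi>_def identity_independent_def by auto
  show "signaling_scheme Sig \<psi>"
  proof -
    have "set_pmf (Dm \<phi>) \<subseteq> {s. \<forall>v. s v \<in> Sig}"
    proof
      fix s assume "s \<in> set_pmf (Dm \<phi>)"
      then obtain y where y: "y \<in> set_pmf (joint \<phi>)" "s = snd y" unfolding Dm_def by auto
      from joint_supp[OF y(1)] scheme y(2) show "s \<in> {s. \<forall>v. s v \<in> Sig}"
        unfolding signaling_scheme_def by blast
    qed
    then show ?thesis using scheme unfolding signaling_scheme_def \<psi>_def by auto
  qed
  show "persuasive W Sig \<psi>"
    unfolding persuasive_def
  proof (intro allI impI ballI)
    fix i \<theta> assume i: "i < CARD('v)" and th: "\<theta> \<in> Sig" and Ppos: "0 < sig_prob \<psi> i \<theta>"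
    define Pj where "Pj j = EJ \<phi> (fP \<theta>) j" for j
    define Mj where "Mj j = EJ \<phi> (fM W \<theta>) j" for j
    define n where "n = real CARD('v)"
    have npos: "n > 0" unfolding n_def by simp
    have P_eq: "sig_prob \<psi> i \<theta> = (\<Sum>j<CARD('v). Pj j) / n"
      unfolding \<psi>_def sp_eq Pj_def n_def by (rule avg_EJ[OF fs i])
    have M_eq: "EJ \<psi> (fM W \<theta>) i = (\<Sum>j<CARD('v). Mj j) / n"
      unfolding \<psi>_def Mj_def n_def by (rule avg_EJ[OF fs i])
    have th0: "0 \<le> \<theta>" using th scheme unfolding signaling_scheme_def by auto
    have Mb: "0 \<le> Mj j \<and> Mj j \<le> n * Pj j" for j
      unfolding Mj_def Pj_def n_def by (rule M_bounds[OF scheme W_range])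
    have Pnn: "0 \<le> Pj j" for j
    proof -
      have "0 \<le> n * Pj j" using Mb[of j] by linarith
      then show ?thesis using npos by (simp add: zero_le_mult_iff)
    qed
    have phi_cond: "\<theta> = max 0 (1 - Mj j / Pj j)" if j: "j < CARD('v)" and pj: "Pj j > 0" for j
    proof -
      have "sig_prob \<phi> j \<theta> > 0" using pj unfolding Pj_def sp_eq .
      have pp: "\<forall>i < CARD('v). \<forall>\<theta> \<in> Sig. sig_prob \<phi> i \<theta> > 0 \<longrightarrow>
        Q W \<phi> i \<theta> \<theta> \<ge> 1 \<and> \<theta> = (LEAST x. x \<ge> 0 \<and> Q W \<phi> i x \<theta> \<ge> 1)"
        using pers unfolding persuasive_def .
      from pp[rule_format, OF j th \<open>sig_prob \<phi> j \<theta> > 0\<close>]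
      have "\<theta> = (LEAST x. x \<ge> 0 \<and> Q W \<phi> j x \<theta> \<ge> 1)" by (rule conjunct2)
      also have "(\<lambda>x. x \<ge> 0 \<and> Q W \<phi> j x \<theta> \<ge> 1) = (\<lambda>x. 0 \<le> x \<and> 1 \<le> x + Mj j / Pj j)"
      proof -
        have "Q W \<phi> j x \<theta> = x + Mj j / Pj j" for x
        proof -
          have "Q W \<phi> j x \<theta> = (x * Pj j + Mj j) / Pj j"
            unfolding Q_eq[OF fs] sp_eq Pj_def Mj_def ..
          then show ?thesis using pj by (simp add: field_simps)
        qed
        then show ?thesis by simp
      qed
      finally show ?thesis by (simp add: least_lem)
    qed
    have Q_psi: "Q W \<psi> i x \<theta> = x + (\<Sum>j<CARD('v). Mj j) / (\<Sum>j<CARD('v). Pj j)" for x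
    proof -
      have fsP: "\<forall>t\<in>type_profiles. finite (set_pmf (\<psi> t))"
        unfolding \<psi>_def Dm_def using joint_fin[OF fs] by simp
      have "Q W \<psi> i x \<theta> = (x * sig_prob \<psi> i \<theta> + EJ \<psi> (fM W \<theta>) i) / sig_prob \<psi> i \<theta>"
        by (simp add: Q_eq[OF fsP] sp_eq)
      also have "\<dots> = x + EJ \<psi> (fM W \<theta>) i / sig_prob \<psi> i \<theta>"
        using Ppos by (simp add: field_simps)
      also have "\<dots> = x + (\<Sum>j<CARD('v). Mj j) / (\<Sum>j<CARD('v). Pj j)"
        unfolding M_eq P_eq using npos by simp
      finally show ?thesis .
    qed
    have SP: "(\<Sum>j<CARD('v). Pj j) > 0" using Ppos P_eq npos by (simp add: zero_less_divide_iff)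
    show "Q W \<psi> i \<theta> \<theta> \<ge> 1 \<and> \<theta> = (LEAST x. x \<ge> 0 \<and> Q W \<psi> i x \<theta> \<ge> 1)"
    proof (cases "\<theta> > 0")
      case True
      have "Mj j = (1 - \<theta>) * Pj j" if j: "j < CARD('v)" for j
      proof (cases "Pj j > 0")
        case True
        with phi_cond[OF j True] \<open>\<theta> > 0\<close> have "\<theta> = 1 - Mj j / Pj j" by (auto simp: max_def split: if_splits)
        then show ?thesis using True by (simp add: field_simps)
      next
        case False
        then have "Pj j = 0" using Pnn[of j] by simp
        then show ?thesis using Mb[of j] by simp
      qed
      then have "(\<Sum>j<CARD('v). Mj j) = (1 - \<theta>) * (\<Sum>j<CARD('v). Pj j)"
        by (simp add: sum_distrib_left)
      then have r: "(\<Sum>j<CARD('v). Mj j) / (\<Sum>j<CARD('v). Pj j) = 1 - \<theta>" using SP by simp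
      show ?thesis unfolding Q_psi r using True least_lem[of "1 - \<theta>"] by simp
    next
      case False
      then have t0: "\<theta> = 0" using th0 by simp
      have "Pj j \<le> Mj j" if j: "j < CARD('v)" for j
      proof (cases "Pj j > 0")
        case True
        with phi_cond[OF j True] t0 have "1 - Mj j / Pj j \<le> 0" by (auto simp: max_def split: if_splits)
        then show ?thesis using True by (simp add: field_simps)
      next
        case False
        then have "Pj j = 0" using Pnn[of j] by simp
        then show ?thesis using Mb[of j] by simp
      qed
      then have "(\<Sum>j<CARD('v). Pj j) \<le> (\<Sum>j<CARD('v). Mj j)" by (intro sum_mono) auto
      then have r: "(\<Sum>j<CARD('v). Mj j) / (\<Sum>j<CARD('v). Pj j) \<ge> 1" using SP by simp
      show ?thesis unfolding Q_psi using r t0 least_lem[of "(\<Sum>j<CARD('v). Mj j) / (\<Sum>j<CARD('v). Pj j)"] by simp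
    qed
  qed
qed

end
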